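(* Let $(\omega_k)_k$ be formulas indexed by integers, and let $\chi,\psi$ be formulas. Suppose $(i_1,\dots,i_n)$, $(j_1,\dots,j_m)$, $(k_1,\dots,k_p)$ are strictly increasing sequences of integers with $\{k_1,\dots,k_p\}=\{i_1,\dots,i_n,j_1,\dots,j_m\}$, and that either $n=0$, or ($n>0$, $m>0$ and $i_n\le j_m$). If $\vdash_{\mathsf{BB'IW}}\omega_{i_1}\dots\omega_{i_n}\to(\chi\to\psi)$ and $\vdash_{\mathsf{BB'IW}}\omega_{j_1}\dots\omega_{j_m}\to\chi$, then $\vdash_{\mathsf{BB'IW}}\omega_{k_1}\dots\omega_{k_p}\to\psi$.
   Context: Formulas are built from propositional atoms with $\to$; $\phi_1\dots\phi_n\to\psi$ denotes $\phi_1\to(\dots(\phi_n\to\psi)\dots)$ if $n>0$ and $\psi$ if $n=0$. $\vdash_{\mathsf{BB'IW}}\phi$ means that $\phi$ is derivable by modus ponens from the axioms consisting of all instances of $(\chi\to\psi)\to((\phi\to\chi)\to(\phi\to\psi))$ (${\sf B}$), $(\phi\to\chi)\to((\chi\to\psi)\to(\phi\to\psi))$ (${\sf B'}$), $\phi\to\phi$ (${\sf I}$), $(\phi\to(\phi\to\chi))\to(\phi\to\chi)$ (${\sf W}$); equivalently, some combinator over the basis ${\sf B},{\sf B'},{\sf I},{\sf W}$ has type $\phi$. *)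

theory Defs
  imports Main
begin

datatype 'a form = Atom 'a | Imp "'a form" "'a form" (infixr "\<rightarrow>" 25)

inductive BBIW :: "'a form \<Rightarrow> bool" where
  axB:  "BBIW ((\<chi> \<rightarrow> \<psi>) \<rightarrow> ((\<phi> \<rightarrow> \<chi>) \<rightarrow> (\<phi> \<rightarrow> \<psi>)))"
| axB': "BBIW ((\<phi> \<rightarrow> \<chi>) \<rightarrow> ((\<chi> \<rightarrow> \<psi>) \<rightarrow> (\<phi> \<rightarrow> \<psi>)))"
| axI:  "BBIW (\<phi> \<rightarrow> \<phi>)"
| axW:  "BBIW ((\<phi> \<rightarrow> (\<phi> \<rightarrow> \<chi>)) \<rightarrow> (\<phi> \<rightarrow> \<chi>))"
| mp:   "BBIW (\<phi> \<rightarrow> \<psi>) \<Longrightarrow> BBIW \<phi> \<Longrightarrow> BBIW \<psi>"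

definition imps :: "'a form list \<Rightarrow> 'a form \<Rightarrow> 'a form" where
  "imps \<phi>s \<psi> = foldr Imp \<phi>s \<psi>"

end

theory Submission
  imports Defs
begin

lemma tr: "BBIW (a \<rightarrow> b) \<Longrightarrow> BBIW (b \<rightarrow> c) \<Longrightarrow> BBIW (a \<rightarrow> c)"
proof -
  assume h1: "BBIW (a \<rightarrow> b)" and h2: "BBIW (b \<rightarrow> c)"
  have "BBIW ((a \<rightarrow> b) \<rightarrow> ((b \<rightarrow> c) \<rightarrow> (a \<rightarrow> c)))" by (rule BBIW.axB')
  then show ?thesis using h1 h2 by (meson BBIW.mp)
qed

lemma imps_Cons[simp]: "imps (x # L) a = (x \<rightarrow> imps L a)"
  by (simp add: imps_def)
lemma imps_Nil[simp]: "imps [] a = a"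
  by (simp add: imps_def)
lemma imps_app[simp]: "imps (L @ M) a = imps L (imps M a)"
  by (simp add: imps_def)

lemma pre: "BBIW (a \<rightarrow> b) \<Longrightarrow> BBIW (imps L a \<rightarrow> imps L b)"
proof (induction L)
  case Nil then show ?case by simp
next
  case (Cons x L)
  have "BBIW ((imps L a \<rightarrow> imps L b) \<rightarrow> ((x \<rightarrow> imps L a) \<rightarrow> (x \<rightarrow> imps L b)))"
    by (rule BBIW.axB)
  then show ?case using Cons by (simp add: BBIW.mp)
qed

lemma preR: "BBIW (a \<rightarrow> b) \<Longrightarrow> BBIW (imps L a) \<Longrightarrow> BBIW (imps L b)"
  using pre BBIW.mp by blast

lemma L1: "BBIW (a \<rightarrow> (b \<rightarrow> c)) \<Longrightarrow> BBIW (a \<rightarrow> ((z \<rightarrow> b) \<rightarrow> (z \<rightarrow> c)))"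
  by (rule tr, assumption, rule BBIW.axB)

lemma L2: "BBIW (a \<rightarrow> (b \<rightarrow> c)) \<Longrightarrow> BBIW ((z \<rightarrow> b) \<rightarrow> (a \<rightarrow> (z \<rightarrow> c)))"
proof -
  assume h: "BBIW (a \<rightarrow> (b \<rightarrow> c))"
  have "BBIW ((a \<rightarrow> (b \<rightarrow> c)) \<rightarrow> (((b \<rightarrow> c) \<rightarrow> (z \<rightarrow> c)) \<rightarrow> (a \<rightarrow> (z \<rightarrow> c))))"
    by (rule BBIW.axB')
  from BBIW.mp[OF this h] have 1: "BBIW (((b \<rightarrow> c) \<rightarrow> (z \<rightarrow> c)) \<rightarrow> (a \<rightarrow> (z \<rightarrow> c)))" .
  have 2: "BBIW ((z \<rightarrow> b) \<rightarrow> ((b \<rightarrow> c) \<rightarrow> (z \<rightarrow> c)))" by (rule BBIW.axB')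
  show ?thesis by (rule tr[OF 2 1])
qed

lemma L3: "BBIW (a \<rightarrow> (b \<rightarrow> c)) \<Longrightarrow> BBIW ((z \<rightarrow> b) \<rightarrow> ((z \<rightarrow> a) \<rightarrow> (z \<rightarrow> z \<rightarrow> c)))"
proof -
  assume h: "BBIW (a \<rightarrow> (b \<rightarrow> c))"
  have s1: "BBIW ((z \<rightarrow> a) \<rightarrow> (z \<rightarrow> (b \<rightarrow> c)))" using pre[OF h, of "[z]"] by simp
  have s2: "BBIW ((z \<rightarrow> b) \<rightarrow> ((b \<rightarrow> c) \<rightarrow> (z \<rightarrow> c)))" by (rule BBIW.axB')
  have s3: "BBIW (((b \<rightarrow> c) \<rightarrow> (z \<rightarrow> c)) \<rightarrow> ((z \<rightarrow> (b \<rightarrow> c)) \<rightarrow> (z \<rightarrow> (z \<rightarrow> c))))"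
    by (rule BBIW.axB)
  have s4: "BBIW ((z \<rightarrow> b) \<rightarrow> ((z \<rightarrow> (b \<rightarrow> c)) \<rightarrow> (z \<rightarrow> z \<rightarrow> c)))" by (rule tr[OF s2 s3])
  have "BBIW (((z \<rightarrow> a) \<rightarrow> (z \<rightarrow> (b \<rightarrow> c))) \<rightarrow> (((z \<rightarrow> (b \<rightarrow> c)) \<rightarrow> (z \<rightarrow> z \<rightarrow> c)) \<rightarrow> ((z \<rightarrow> a) \<rightarrow> (z \<rightarrow> z \<rightarrow> c))))"
    by (rule BBIW.axB')
  from BBIW.mp[OF this s1] have s5: "BBIW (((z \<rightarrow> (b \<rightarrow> c)) \<rightarrow> (z \<rightarrow> z \<rightarrow> c)) \<rightarrow> ((z \<rightarrow> a) \<rightarrow> (z \<rightarrow> z \<rightarrow> c)))"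
    .
  show ?thesis by (rule tr[OF s4 s5])
qed

lemma split_last:
  fixes xs :: "int list"
  assumes "sorted_wrt (<) xs" "z \<in> set xs" "\<forall>x\<in>set xs. x \<le> z"
  shows "\<exists>ys. xs = ys @ [z] \<and> sorted_wrt (<) ys \<and> set ys = set xs - {z}"
proof -
  obtain ys l where xs: "xs = ys @ [l]" using assms(2) by (cases xs rule: rev_exhaust) auto
  have lt: "\<forall>y\<in>set ys. y < l" and s: "sorted_wrt (<) ys" using assms(1) xs by (auto simp: sorted_wrt_append)
  have "l = z" using assms(2,3) xs lt by fastforce
  then show ?thesis using xs s lt by auto
qed

lemma gen:
  fixes \<omega> :: "int \<Rightarrow> 'a form" and kk :: "int list"
  shows "sorted_wrt (<) kk \<Longrightarrow> sorted_wrt (<) I \<Longrightarrow> sorted_wrt (<) J \<Longrightarrow>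
    set kk = set I \<union> set J \<Longrightarrow> BBIW (\<alpha> \<rightarrow> \<beta> \<rightarrow> \<gamma>) \<Longrightarrow> BBIW (\<beta> \<rightarrow> \<alpha> \<rightarrow> \<gamma>) \<Longrightarrow>
    BBIW (imps (map \<omega> I) \<alpha>) \<Longrightarrow> BBIW (imps (map \<omega> J) \<beta>) \<Longrightarrow> BBIW (imps (map \<omega> kk) \<gamma>)"
proof (induction kk arbitrary: I J \<alpha> \<beta> \<gamma> rule: rev_induct)
  case Nil
  then have "I = []" "J = []" by auto
  then show ?case using Nil by (auto intro: BBIW.mp)
next
  case (snoc z K)
  have sK: "sorted_wrt (<) K" and ltK: "\<forall>x\<in>set K. x < z"
    using snoc.prems(1) by (auto simp: sorted_wrt_append)
  have zin: "z \<in> set I \<union> set J" using snoc.prems(4) by auto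
  have le: "\<forall>x\<in>set I \<union> set J. x \<le> z" using snoc.prems(4) ltK by (auto simp flip: snoc.prems(4))
  have setK: "set K = (set I \<union> set J) - {z}" using snoc.prems(4) ltK by auto
  show ?case
  proof (cases "z \<in> set I")
    case zI: True
    obtain I0 where I0: "I = I0 @ [z]" "sorted_wrt (<) I0" "set I0 = set I - {z}"
      using split_last[OF snoc.prems(2) zI] le by auto
    show ?thesis
    proof (cases "z \<in> set J")
      case zJ: True
      obtain J0 where J0: "J = J0 @ [z]" "sorted_wrt (<) J0" "set J0 = set J - {z}"
        using split_last[OF snoc.prems(3) zJ] le by auto
      have "BBIW (imps (map \<omega> K) (\<omega> z \<rightarrow> \<omega> z \<rightarrow> \<gamma>))"
      proof (rule snoc.IH[OF sK I0(2) J0(2) _ L3[OF snoc.prems(6)] L3[OF snoc.prems(5)]])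
        show "set K = set I0 \<union> set J0" using setK I0(3) J0(3) by blast
        show "BBIW (imps (map \<omega> I0) (\<omega> z \<rightarrow> \<alpha>))" using snoc.prems(7) I0(1) by simp
        show "BBIW (imps (map \<omega> J0) (\<omega> z \<rightarrow> \<beta>))" using snoc.prems(8) J0(1) by simp
      qed
      then have "BBIW (imps (map \<omega> K) (\<omega> z \<rightarrow> \<gamma>))"
        by (rule preR[rotated]) (rule BBIW.axW)
      then show ?thesis by simp
    next
      case zJ: False
      have "BBIW (imps (map \<omega> K) (\<omega> z \<rightarrow> \<gamma>))"
      proof (rule snoc.IH[OF sK I0(2) snoc.prems(3) _ L2[OF snoc.prems(6)] L1[OF snoc.prems(6)] _ snoc.prems(8)])
        show "set K = set I0 \<union> set J" using setK I0(3) zJ by blast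
        show "BBIW (imps (map \<omega> I0) (\<omega> z \<rightarrow> \<alpha>))" using snoc.prems(7) I0(1) by simp
      qed
      then show ?thesis by simp
    qed
  next
    case zI: False
    then have zJ: "z \<in> set J" using zin by auto
    obtain J0 where J0: "J = J0 @ [z]" "sorted_wrt (<) J0" "set J0 = set J - {z}"
      using split_last[OF snoc.prems(3) zJ] le by auto
    have "BBIW (imps (map \<omega> K) (\<omega> z \<rightarrow> \<gamma>))"
    proof (rule snoc.IH[OF sK snoc.prems(2) J0(2) _ L1[OF snoc.prems(5)] L2[OF snoc.prems(5)] snoc.prems(7)])
      show "set K = set I \<union> set J0" using setK J0(3) zI by blast
      show "BBIW (imps (map \<omega> J0) (\<omega> z \<rightarrow> \<beta>))" using snoc.prems(8) J0(1) by simp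
    qed
    then show ?thesis by simp
  qed
qed

theorem lemma1p9:
  fixes \<omega> :: "int \<Rightarrow> 'a form" and \<chi> \<psi> :: "'a form"
    and ii jj kk :: "int list"
  assumes "sorted_wrt (<) ii" and "sorted_wrt (<) jj" and "sorted_wrt (<) kk"
    and "set kk = set ii \<union> set jj"
    and "ii = [] \<or> (ii \<noteq> [] \<and> jj \<noteq> [] \<and> last ii \<le> last jj)"
    and "BBIW (imps (map \<omega> ii) (\<chi> \<rightarrow> \<psi>))"
    and "BBIW (imps (map \<omega> jj) \<chi>)"
  shows "BBIW (imps (map \<omega> kk) \<psi>)"
  proof (cases "jj = []")
  case True
  then have "ii = []" "kk = []" using assms(4,5) by auto
  then have "BBIW (\<chi> \<rightarrow> \<psi>)" "BBIW \<chi>" using True assms(6,7) by simp_all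
  then show ?thesis using \<open>kk = []\<close> BBIW.mp by simp
next
  case False
  define z where "z = last jj"
  obtain J0 where jj: "jj = J0 @ [z]" using False unfolding z_def by (cases jj rule: rev_exhaust) auto
  have lz: "last jj = z" using jj by simp
  have lej: "\<forall>x\<in>set jj. x \<le> z" using assms(2) jj by (auto simp: sorted_wrt_append)
  have lei: "\<forall>x\<in>set ii. x \<le> z"
  proof (cases "ii = []")
    case False
    obtain I0 l where ii: "ii = I0 @ [l]" using False by (cases ii rule: rev_exhaust) auto
    have "last ii \<le> last jj" using assms(5) False by auto
    then have "l \<le> z" using ii lz by simp
    then show ?thesis using assms(1) ii by (auto simp: sorted_wrt_append)
  qed simp
  have zk: "z \<in> set kk" using assms(4) jj by auto
  have lek: "\<forall>x\<in>set kk. x \<le> z" using assms(4) lei lej by auto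
  obtain K0 where K0: "kk = K0 @ [z]" "sorted_wrt (<) K0" "set K0 = set kk - {z}"
    using split_last[OF assms(3) zk lek] by auto
  obtain J1 where J1: "jj = J1 @ [z]" "sorted_wrt (<) J1" "set J1 = set jj - {z}"
    using split_last[OF assms(2) _ lej] jj by auto
  have ab: "BBIW ((\<chi> \<rightarrow> \<psi>) \<rightarrow> (\<omega> z \<rightarrow> \<chi>) \<rightarrow> (\<omega> z \<rightarrow> \<psi>))" by (rule BBIW.axB)
  have ba: "BBIW ((\<omega> z \<rightarrow> \<chi>) \<rightarrow> (\<chi> \<rightarrow> \<psi>) \<rightarrow> (\<omega> z \<rightarrow> \<psi>))" by (rule BBIW.axB')
  have g: "BBIW (imps (map \<omega> J1) (\<omega> z \<rightarrow> \<chi>))" using assms(7) J1 by simp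
  show ?thesis
  proof (cases "z \<in> set ii")
    case True
    have "BBIW (imps (map \<omega> kk) (\<omega> z \<rightarrow> \<psi>))"
      by (rule gen[OF assms(3,1) J1(2) _ ab ba assms(6) g]) (use assms(4) J1(3) True in blast)
    then have "BBIW (imps (map \<omega> K0) (\<omega> z \<rightarrow> \<omega> z \<rightarrow> \<psi>))" using K0 by simp
    then have "BBIW (imps (map \<omega> K0) (\<omega> z \<rightarrow> \<psi>))"
      by (rule preR[rotated]) (rule BBIW.axW)
    then show ?thesis using K0 by simp
  next
    case False
    have "BBIW (imps (map \<omega> K0) (\<omega> z \<rightarrow> \<psi>))"
      by (rule gen[OF K0(2) assms(1) J1(2) _ ab ba assms(6) g]) (use assms(4) J1(3) K0(3) False in blast)
    then show ?thesis using K0 by simp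
  qed
qed

end
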